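(* Suppose the p-values are conditionally super-uniform: for every $t$ with $\theta_t=0$, $\mathbb{P}(p_t\le u\mid\mathcal{F}_{t-1})\le u$ a.s. for all $u\in[0,1]$ (equivalently, for every $\mathcal F_{t-1}$-measurable $[0,1]$-valued $U$, $\mathbb{P}(p_t\le U\mid\mathcal{F}_{t-1})\le U$). Let $\mathrm{FDP}^*_{\mathrm{e}}(t)=\sum_{j\in\mathcal{H}_0(t)}\frac{\alpha_j}{R_{j-1}+1}$. Then for every $t\ge1$: if $\mathbb{E}[\mathrm{FDP}^*_{\mathrm{e}}(t)]\le\alpha$, then $\mathrm{FDR}(t)\le\alpha$.
   Context: Let $\alpha\in(0,1)$ be a target level. Hypotheses are indexed by $t=1,2,\dots$; $\theta_t\in\{0,1\}$ is a fixed (non-random) indicator with $\theta_t=0$ iff the $t$-th null hypothesis is true. $p_1,p_2,\dots$ are $[0,1]$-valued random variables (p-values). Testing levels $\alpha_1,\alpha_2,\dots$ are $[0,1]$-valued random variables and the decisions are $\delta_t=\mathbb{1}\{p_t\le\alpha_t\}$. Let $\mathcal{F}_t=\sigma(\delta_1,\dots,\delta_t)$, $\mathcal{F}_0$ trivial; each $\alpha_t$ is required to be $\mathcal{F}_{t-1}$-measurable. $R_t=\sum_{j=1}^t\delta_j$, $R_0=0$. $\mathcal{H}_0(t)=\{j\le t:\theta_j=0\}$. $\mathrm{FDR}(t)=\mathbb{E}\big[\sum_{j\in\mathcal{H}_0(t)}\delta_j/(R_t\vee 1)\big]$. *)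

theory Defs
  imports "HOL-Probability.Probability"
begin

(* Decision delta_t = 1{p_t <= alpha_t}. Hypotheses are indexed from 1. *)
definition delta :: "(nat \<Rightarrow> 'a \<Rightarrow> real) \<Rightarrow> (nat \<Rightarrow> 'a \<Rightarrow> real) \<Rightarrow> nat \<Rightarrow> 'a \<Rightarrow> real" where
  "delta p alpha t \<omega> = (if p t \<omega> \<le> alpha t \<omega> then 1 else 0)"

definition rej :: "(nat \<Rightarrow> 'a \<Rightarrow> real) \<Rightarrow> (nat \<Rightarrow> 'a \<Rightarrow> real) \<Rightarrow> nat \<Rightarrow> 'a \<Rightarrow> real" where
  "rej p alpha t \<omega> = (\<Sum>j\<in>{1..t}. delta p alpha j \<omega>)"

definition filt :: "'a measure \<Rightarrow> (nat \<Rightarrow> 'a \<Rightarrow> real) \<Rightarrow> (nat \<Rightarrow> 'a \<Rightarrow> real) \<Rightarrow> nat \<Rightarrow> 'a measure" where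
  "filt M p alpha t = sigma (space M)
     (\<Union>j\<in>{1..t}. {delta p alpha j -` B \<inter> space M | B. B \<in> sets borel})"

definition H0 :: "(nat \<Rightarrow> nat) \<Rightarrow> nat \<Rightarrow> nat set" where
  "H0 theta t = {j \<in> {1..t}. theta j = 0}"

definition FDR :: "'a measure \<Rightarrow> (nat \<Rightarrow> 'a \<Rightarrow> real) \<Rightarrow> (nat \<Rightarrow> 'a \<Rightarrow> real) \<Rightarrow> (nat \<Rightarrow> nat) \<Rightarrow> nat \<Rightarrow> real" where
  "FDR M p alpha theta t =
     (\<integral>\<omega>. (\<Sum>j\<in>H0 theta t. delta p alpha j \<omega>) / max (rej p alpha t \<omega>) 1 \<partial>M)"

definition FDP_star_e :: "(nat \<Rightarrow> 'a \<Rightarrow> real) \<Rightarrow> (nat \<Rightarrow> 'a \<Rightarrow> real) \<Rightarrow> (nat \<Rightarrow> nat) \<Rightarrow> nat \<Rightarrow> 'a \<Rightarrow> real" where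
  "FDP_star_e p alpha theta t \<omega> =
     (\<Sum>j\<in>H0 theta t. alpha j \<omega> / (rej p alpha (j - 1) \<omega> + 1))"

end

theory Submission
  imports Defs
begin

lemma delta_meas[measurable]:
  assumes [measurable]: "p s \<in> borel_measurable M" "alpha s \<in> borel_measurable M"
  shows "delta p alpha s \<in> borel_measurable M"
  unfolding delta_def[abs_def] by measurable

lemma delta_01: "delta p alpha s w \<in> {0, 1}"
  unfolding delta_def by auto

lemma rej_Suc: "rej p alpha (Suc n) w = rej p alpha n w + delta p alpha (Suc n) w"
  unfolding rej_def by simp

lemma rej_nonneg: "rej p alpha n w \<ge> 0"
  unfolding rej_def by (rule sum_nonneg) (auto simp: delta_def)

lemma rej_mono: "n \<le> m \<Longrightarrow> rej p alpha n w \<le> rej p alpha m w"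
  unfolding rej_def by (rule sum_mono2) (auto simp: delta_def)

lemma rej_meas:
  assumes "\<And>s. p s \<in> borel_measurable M" "\<And>s. alpha s \<in> borel_measurable M"
  shows "rej p alpha n \<in> borel_measurable M"
  unfolding rej_def[abs_def] using assms by measurable

definition gens where
  "gens M p alpha n = (\<Union>j\<in>{1..n}. {delta p alpha j -` B \<inter> space M | B. B \<in> sets borel})"

lemma gens_Pow: "gens M p alpha n \<subseteq> Pow (space M)"
  unfolding gens_def by auto

lemma sets_filt: "sets (filt M p alpha n) = sigma_sets (space M) (gens M p alpha n)"
  unfolding filt_def gens_def[symmetric] by (rule sets_measure_of[OF gens_Pow])

lemma space_filt: "space (filt M p alpha n) = space M"
  unfolding filt_def gens_def[symmetric] by (rule space_measure_of[OF gens_Pow])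

lemma subalg_filt:
  assumes "\<And>s. p s \<in> borel_measurable M" "\<And>s. alpha s \<in> borel_measurable M"
  shows "subalgebra M (filt M p alpha n)"
proof -
  have "gens M p alpha n \<subseteq> sets M"
    unfolding gens_def using delta_meas[OF assms] by (auto intro: measurable_sets)
  then show ?thesis unfolding subalgebra_def space_filt sets_filt
    by (simp add: sets.sigma_sets_subset)
qed

lemma delta_meas_filt:
  assumes "i \<in> {1..n}"
  shows "delta p alpha i \<in> borel_measurable (filt M p alpha n)"
proof (rule measurableI)
  fix B :: "real set" assume "B \<in> sets borel"
  then have "delta p alpha i -` B \<inter> space M \<in> gens M p alpha n"
    unfolding gens_def using assms by blast
  then show "delta p alpha i -` B \<inter> space (filt M p alpha n) \<in> sets (filt M p alpha n)"
    unfolding sets_filt space_filt by blast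
qed auto

lemma filt_saturated:
  assumes "S \<in> sets (filt M p alpha n)" "w \<in> space M" "w' \<in> space M"
    and "\<And>i. i \<in> {1..n} \<Longrightarrow> delta p alpha i w = delta p alpha i w'"
  shows "w \<in> S \<longleftrightarrow> w' \<in> S"
proof -
  have "S \<in> sigma_sets (space M) (gens M p alpha n)" using assms(1) sets_filt by blast
  then show ?thesis
  proof induction
    case (Basic a)
    then show ?case unfolding gens_def using assms by auto
  next
    case Empty
    then show ?case by simp
  next
    case (Compl a)
    then show ?case using assms by auto
  next
    case (Union a)
    then show ?case by auto
  qed
qed

lemma filt_const:
  fixes f :: "'a \<Rightarrow> real"
  assumes "f \<in> borel_measurable (filt M p alpha n)" "w \<in> space M" "w' \<in> space M"
    and "\<And>i. i \<in> {1..n} \<Longrightarrow> delta p alpha i w = delta p alpha i w'"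
  shows "f w = f w'"
proof -
  have "f -` {f w} \<inter> space (filt M p alpha n) \<in> sets (filt M p alpha n)"
    using assms(1) by (rule measurable_sets) simp
  from filt_saturated[OF this assms(2-4)] assms(2,3) show ?thesis by (simp add: space_filt)
qed

lemma cond_bound:
  fixes M :: "'a measure"
  assumes "prob_space M" "subalgebra M F" "B \<in> sets F" "X \<in> sets M"
    and "AE w in M. real_cond_exp M F (indicator X) w \<le> u"
  shows "(\<integral>w. indicator B w * indicator X w \<partial>M) \<le> u * measure M B"
proof -
  interpret prob_space M by fact
  have "finite_measure_subalgebra M F"
    by (simp add: finite_measure_subalgebra_def finite_measure_subalgebra_axioms_def
        finite_measure_axioms assms(2))
  then interpret sigma_finite_subalgebra M F by (rule finite_measure_subalgebra_is_sigma_finite)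
  have BM: "B \<in> sets M" using assms(2,3) by (auto simp: subalgebra_def)
  have iX: "integrable M (indicator X :: 'a \<Rightarrow> real)"
    using assms(4) by (simp add: integrable_indicator_iff less_top[symmetric])
  have "(\<integral>w. indicator B w * indicator X w \<partial>M) = (\<integral>w\<in>B. (indicator X w :: real) \<partial>M)"
    unfolding set_lebesgue_integral_def by (rule Bochner_Integration.integral_cong) (auto simp: indicator_def)
  also have "\<dots> = (\<integral>w\<in>B. real_cond_exp M F (indicator X) w \<partial>M)"
    by (rule real_cond_exp_intA[OF iX assms(3)])
  also have "\<dots> = (\<integral>w. indicator B w * real_cond_exp M F (indicator X) w \<partial>M)"
    unfolding set_lebesgue_integral_def by (rule Bochner_Integration.integral_cong) (auto simp: indicator_def)
  also have "\<dots> \<le> (\<integral>w. indicator B w * u \<partial>M)"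
  proof (rule integral_mono_AE)
    show "integrable M (\<lambda>w. indicator B w * real_cond_exp M F (indicator X) w)"
      using integrable_mult_indicator[OF BM real_cond_exp_int(1)[OF iX]] by simp
    show "integrable M (\<lambda>w. indicator B w * u)"
      using integrable_mult_indicator[OF BM integrable_const[of u]] by simp
    show "AE w in M. indicator B w * real_cond_exp M F (indicator X) w \<le> indicator B w * u"
      using assms(5) by eventually_elim (auto simp: indicator_def)
  qed
  also have "\<dots> = u * measure M B"
    using BM by simp
  finally show ?thesis .
qed

lemma key_step:
  fixes M :: "'a measure" and p alpha :: "nat \<Rightarrow> 'a \<Rightarrow> real"
  assumes P: "prob_space M"
    and mp: "\<And>s. p s \<in> borel_measurable M"
    and ma: "\<And>s. alpha s \<in> borel_measurable M"
    and ra: "\<And>s w. w \<in> space M \<Longrightarrow> alpha s w \<in> {0..1}"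
    and af: "alpha j \<in> borel_measurable (filt M p alpha n)"
    and cond: "\<And>u. u \<in> {0..1} \<Longrightarrow>
           AE w in M. real_cond_exp M (filt M p alpha n)
                          (indicator {w'\<in>space M. p j w' \<le> u}) w \<le> u"
  shows "(\<integral>w. delta p alpha j w / (rej p alpha n w + 1) \<partial>M)
         \<le> (\<integral>w. alpha j w / (rej p alpha n w + 1) \<partial>M)"
proof -
  interpret prob_space M by fact
  note [measurable] = mp ma
  define F where "F = filt M p alpha n"
  have subF: "subalgebra M F" unfolding F_def by (rule subalg_filt[OF mp ma])
  define key where "key w = {i\<in>{1..n}. delta p alpha i w = 1}" for w
  define A where "A S = {w\<in>space M. key w = S}" for S
  define cv where "cv S = (if A S = {} then 0 else alpha j (SOME w. w \<in> A S))" for S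
  define X where "X S = {w\<in>space M. p j w \<le> cv S}" for S
  define I where "I = Pow {1..n}"
  have finI: "finite I" unfolding I_def by simp
  have keyI: "key w \<in> I" for w unfolding I_def key_def by auto
  have keyeq: "key w = S \<longleftrightarrow> (\<forall>i\<in>{1..n}. delta p alpha i w = (if i \<in> S then 1 else 0))"
    if "S \<in> I" for S w
    using that delta_01[of p alpha _ w] unfolding I_def key_def by (auto simp: insert_commute) (metis atLeastAtMost_iff zero_neq_one)
  have AF: "A S \<in> sets F" if "S \<in> I" for S
  proof -
    have "A S = {w\<in>space F. \<forall>i\<in>{1..n}. delta p alpha i w = (if i \<in> S then 1 else 0)}"
      unfolding A_def F_def space_filt using keyeq[OF that] by auto
    also have "\<dots> \<in> sets F"
    proof (rule sets.sets_Collect_finite_All)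
      fix i assume i: "i \<in> {1..n}"
      have "delta p alpha i -` {if i \<in> S then 1 else 0} \<inter> space F \<in> sets F"
        unfolding F_def using delta_meas_filt[OF i] by (rule measurable_sets) simp
      moreover have "delta p alpha i -` {if i \<in> S then 1 else 0} \<inter> space F
          = {w\<in>space F. delta p alpha i w = (if i \<in> S then 1 else 0)}" by auto
      ultimately show "{w\<in>space F. delta p alpha i w = (if i \<in> S then 1 else 0)} \<in> sets F" by simp
    qed simp
    finally show ?thesis .
  qed
  have AM: "A S \<in> sets M" if "S \<in> I" for S
    using AF[OF that] subF by (auto simp: subalgebra_def)
  have XM: "X S \<in> sets M" for S unfolding X_def by measurable
  have acv: "alpha j w = cv S" if "S \<in> I" "w \<in> A S" for S w
  proof -
    have ne: "A S \<noteq> {}" using that by auto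
    define w' where "w' = (SOME w. w \<in> A S)"
    have w': "w' \<in> A S" unfolding w'_def using that(2) by (rule someI)
    have "alpha j w = alpha j w'"
    proof (rule filt_const[OF af])
      show "w \<in> space M" "w' \<in> space M" using that(2) w' by (auto simp: A_def)
      fix i assume "i \<in> {1..n}"
      then show "delta p alpha i w = delta p alpha i w'"
        using that(2) w' keyeq[OF that(1)] by (auto simp: A_def)
    qed
    then show ?thesis using ne by (simp add: cv_def w'_def)
  qed
  have cv01: "cv S \<in> {0..1}" if "S \<in> I" for S
  proof (cases "A S = {}")
    case True then show ?thesis by (simp add: cv_def)
  next
    case False
    then obtain w where "w \<in> A S" by auto
    then show ?thesis using acv[OF that] ra[of w j] by (auto simp: A_def)
  qed
  have rejcard: "rej p alpha n w = real (card (key w))" for w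
  proof -
    have "rej p alpha n w = (\<Sum>i\<in>{1..n}. if i \<in> key w then 1 else 0)"
      unfolding rej_def key_def
      by (rule sum.cong) (use delta_01[of p alpha _ w] in auto)
    also have "\<dots> = real (card (key w))"
      by (simp add: sum.If_cases key_def) (rule arg_cong[where f=card]; auto)
    finally show ?thesis .
  qed
  have indA: "indicator (A S) w = (if S = key w then 1 else (0::real))" if "w \<in> space M" for S w
    using that by (auto simp: A_def indicator_def)
  have eqL: "delta p alpha j w / (rej p alpha n w + 1)
      = (\<Sum>S\<in>I. indicator (A S) w * indicator (X S) w / (real (card S) + 1))"
    if w: "w \<in> space M" for w
  proof -
    have "(\<Sum>S\<in>I. indicator (A S) w * indicator (X S) w / (real (card S) + 1))
       = (\<Sum>S\<in>I. if S = key w then indicator (X S) w / (real (card S) + 1) else 0)"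
      by (rule sum.cong) (auto simp: indA[OF w])
    also have "\<dots> = indicator (X (key w)) w / (real (card (key w)) + 1)"
      using finI keyI[of w] by (simp add: sum.delta')
    also have "\<dots> = delta p alpha j w / (rej p alpha n w + 1)"
    proof -
      have "w \<in> A (key w)" using w by (simp add: A_def)
      then have "alpha j w = cv (key w)" using acv keyI by blast
      then show ?thesis using w by (simp add: X_def delta_def indicator_def rejcard)
    qed
    finally show ?thesis by simp
  qed
  have eqR: "alpha j w / (rej p alpha n w + 1)
      = (\<Sum>S\<in>I. indicator (A S) w * cv S / (real (card S) + 1))"
    if w: "w \<in> space M" for w
  proof -
    have "(\<Sum>S\<in>I. indicator (A S) w * cv S / (real (card S) + 1))
       = (\<Sum>S\<in>I. if S = key w then cv S / (real (card S) + 1) else 0)"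
      by (rule sum.cong) (auto simp: indA[OF w])
    also have "\<dots> = cv (key w) / (real (card (key w)) + 1)"
      using finI keyI[of w] by (simp add: sum.delta')
    also have "\<dots> = alpha j w / (rej p alpha n w + 1)"
    proof -
      have "w \<in> A (key w)" using w by (simp add: A_def)
      then have "alpha j w = cv (key w)" using acv keyI by blast
      then show ?thesis by (simp add: rejcard)
    qed
    finally show ?thesis by simp
  qed
  have iX: "integrable M (indicator (X S) :: 'a \<Rightarrow> real)" for S
    using XM by (simp add: integrable_indicator_iff less_top[symmetric])
  have intL: "integrable M (\<lambda>w. indicator (A S) w * indicator (X S) w / (real (card S) + 1))"
    if "S \<in> I" for S
    using integrable_mult_indicator[OF AM[OF that] iX[of S]]
    by (intro integrable_divide_zero) simp
  have intR: "integrable M (\<lambda>w. indicator (A S) w * cv S / (real (card S) + 1))"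
    if "S \<in> I" for S
    using integrable_mult_indicator[OF AM[OF that] integrable_const[of "cv S"]]
    by (intro integrable_divide_zero) simp
  have "(\<integral>w. delta p alpha j w / (rej p alpha n w + 1) \<partial>M)
      = (\<integral>w. (\<Sum>S\<in>I. indicator (A S) w * indicator (X S) w / (real (card S) + 1)) \<partial>M)"
    by (rule Bochner_Integration.integral_cong) (auto simp: eqL)
  also have "\<dots> = (\<Sum>S\<in>I. (\<integral>w. indicator (A S) w * indicator (X S) w \<partial>M) / (real (card S) + 1))"
    by (subst Bochner_Integration.integral_sum) (auto intro: intL)
  also have "\<dots> \<le> (\<Sum>S\<in>I. cv S * measure M (A S) / (real (card S) + 1))"
  proof (rule sum_mono)
    fix S assume S: "S \<in> I"
    have "(\<integral>w. indicator (A S) w * indicator (X S) w \<partial>M) \<le> cv S * measure M (A S)"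
      using cond_bound[OF P subF AF[OF S] XM cond[OF cv01[OF S], folded F_def X_def]] .
    then show "(\<integral>w. indicator (A S) w * indicator (X S) w \<partial>M) / (real (card S) + 1)
        \<le> cv S * measure M (A S) / (real (card S) + 1)"
      by (simp add: divide_right_mono)
  qed
  also have "\<dots> = (\<Sum>S\<in>I. (\<integral>w. indicator (A S) w * cv S / (real (card S) + 1) \<partial>M))"
    by (rule sum.cong) (auto simp: AM mult.commute)
  also have "\<dots> = (\<integral>w. (\<Sum>S\<in>I. indicator (A S) w * cv S / (real (card S) + 1)) \<partial>M)"
    by (rule Bochner_Integration.integral_sum[symmetric]) (rule intR)
  also have "\<dots> = (\<integral>w. alpha j w / (rej p alpha n w + 1) \<partial>M)"
    by (rule Bochner_Integration.integral_cong) (auto simp: eqR)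
  finally show ?thesis .
qed

lemma pointwise_le:
  assumes "1 \<le> j" "j \<le> t"
  shows "delta p alpha j w / max (rej p alpha t w) 1 \<le> delta p alpha j w / (rej p alpha (j - 1) w + 1)"
proof (cases "delta p alpha j w = 0")
  case True then show ?thesis by simp
next
  case False
  then have d1: "delta p alpha j w = 1" using delta_01[of p alpha j w] by auto
  have e: "Suc (j - 1) = j" using assms(1) by simp
  have "rej p alpha j w = rej p alpha (j - 1) w + delta p alpha j w"
    using rej_Suc[of p alpha "j - 1" w] unfolding e .
  moreover have "rej p alpha j w \<le> rej p alpha t w" by (rule rej_mono[OF assms(2)])
  ultimately have le: "rej p alpha (j - 1) w + 1 \<le> max (rej p alpha t w) 1" using d1 by linarith
  have pos: "0 < rej p alpha (j - 1) w + 1" using rej_nonneg[of p alpha "j - 1" w] by linarith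
  have "1 / max (rej p alpha t w) 1 \<le> 1 / (rej p alpha (j - 1) w + 1)"
    by (rule frac_le) (use le pos in auto)
  then show ?thesis unfolding d1 .
qed

lemma bound_aux:
  fixes a b :: real
  assumes "0 \<le> a" "a \<le> 1" "1 \<le> b"
  shows "norm (a / b) \<le> 1"
proof -
  have b: "0 < b" using assms(3) by linarith
  have "a / b \<le> 1" using assms b by (simp add: divide_le_eq)
  moreover have "0 \<le> a / b" using assms(1) b by simp
  ultimately show ?thesis by simp
qed

theorem theorem3:
  fixes M :: "'a measure"
    and p alpha :: "nat \<Rightarrow> 'a \<Rightarrow> real"
    and theta :: "nat \<Rightarrow> nat"
    and \<alpha> :: real
    and t :: nat
  assumes "prob_space M"
    and "0 < \<alpha>" and "\<alpha> < 1"
    and "\<And>s. theta s \<in> {0, 1}"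
    and "\<And>s. p s \<in> borel_measurable M"
    and "\<And>s \<omega>. \<omega> \<in> space M \<Longrightarrow> p s \<omega> \<in> {0..1}"
    and "\<And>s. alpha s \<in> borel_measurable M"
    and "\<And>s \<omega>. \<omega> \<in> space M \<Longrightarrow> alpha s \<omega> \<in> {0..1}"
    and "\<And>s. s \<ge> 1 \<Longrightarrow> alpha s \<in> borel_measurable (filt M p alpha (s - 1))"
    and "\<And>s u. s \<ge> 1 \<Longrightarrow> theta s = 0 \<Longrightarrow> u \<in> {0..1} \<Longrightarrow>
           AE \<omega> in M. real_cond_exp M (filt M p alpha (s - 1))
                          (indicator {\<omega>'\<in>space M. p s \<omega>' \<le> u}) \<omega> \<le> u"
    and "t \<ge> 1"
    and "(\<integral>\<omega>. FDP_star_e p alpha theta t \<omega> \<partial>M) \<le> \<alpha>"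
  shows "FDR M p alpha theta t \<le> \<alpha>"
proof -
  interpret prob_space M by fact
  note mp[measurable] = assms(5) and ma[measurable] = assms(7)
  note rm[measurable] = rej_meas[OF assms(5) assms(7)]
  have H0: "j \<in> H0 theta t \<Longrightarrow> 1 \<le> j \<and> j \<le> t \<and> theta j = 0" for j
    by (auto simp: H0_def)
  have finH: "finite (H0 theta t)" by (simp add: H0_def)
  have int1: "integrable M (\<lambda>w. delta p alpha j w / max (rej p alpha t w) 1)" for j
  proof (rule integrable_const_bound[where B=1])
    show "AE w in M. norm (delta p alpha j w / max (rej p alpha t w) 1) \<le> 1"
    proof (rule AE_I2)
      fix w
      have "delta p alpha j w \<in> {0,1}" by (rule delta_01)
      then show "norm (delta p alpha j w / max (rej p alpha t w) 1) \<le> 1"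
        by (intro bound_aux) auto
    qed
  qed (measurable)
  have int2: "integrable M (\<lambda>w. delta p alpha j w / (rej p alpha (j - 1) w + 1))" for j
  proof (rule integrable_const_bound[where B=1])
    show "AE w in M. norm (delta p alpha j w / (rej p alpha (j - 1) w + 1)) \<le> 1"
    proof (rule AE_I2)
      fix w
      have "delta p alpha j w \<in> {0,1}" by (rule delta_01)
      moreover have "0 \<le> rej p alpha (j - 1) w" by (rule rej_nonneg)
      ultimately show "norm (delta p alpha j w / (rej p alpha (j - 1) w + 1)) \<le> 1"
        by (intro bound_aux) auto
    qed
  qed (measurable)
  have int3: "integrable M (\<lambda>w. alpha j w / (rej p alpha (j - 1) w + 1))" for j
  proof (rule integrable_const_bound[where B=1])
    show "AE w in M. norm (alpha j w / (rej p alpha (j - 1) w + 1)) \<le> 1"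
    proof (rule AE_I2)
      fix w assume "w \<in> space M"
      then have "alpha j w \<in> {0..1}" by (rule assms(8))
      moreover have "0 \<le> rej p alpha (j - 1) w" by (rule rej_nonneg)
      ultimately show "norm (alpha j w / (rej p alpha (j - 1) w + 1)) \<le> 1"
        by (intro bound_aux) auto
    qed
  qed (measurable)
  have "FDR M p alpha theta t = (\<integral>w. (\<Sum>j\<in>H0 theta t. delta p alpha j w / max (rej p alpha t w) 1) \<partial>M)"
    unfolding FDR_def by (simp add: sum_divide_distrib)
  also have "\<dots> \<le> (\<integral>w. (\<Sum>j\<in>H0 theta t. delta p alpha j w / (rej p alpha (j - 1) w + 1)) \<partial>M)"
  proof (rule integral_mono)
    show "integrable M (\<lambda>w. \<Sum>j\<in>H0 theta t. delta p alpha j w / max (rej p alpha t w) 1)"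
      using int1 by auto
    show "integrable M (\<lambda>w. \<Sum>j\<in>H0 theta t. delta p alpha j w / (rej p alpha (j - 1) w + 1))"
      using int2 by auto
    fix w show "(\<Sum>j\<in>H0 theta t. delta p alpha j w / max (rej p alpha t w) 1)
        \<le> (\<Sum>j\<in>H0 theta t. delta p alpha j w / (rej p alpha (j - 1) w + 1))"
    proof (rule sum_mono)
      fix j assume "j \<in> H0 theta t"
      then have "1 \<le> j" "j \<le> t" using H0 by auto
      then show "delta p alpha j w / max (rej p alpha t w) 1 \<le> delta p alpha j w / (rej p alpha (j - 1) w + 1)"
        by (rule pointwise_le)
    qed
  qed
  also have "\<dots> = (\<Sum>j\<in>H0 theta t. (\<integral>w. delta p alpha j w / (rej p alpha (j - 1) w + 1) \<partial>M))"
    by (rule Bochner_Integration.integral_sum) (rule int2)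
  also have "\<dots> \<le> (\<Sum>j\<in>H0 theta t. (\<integral>w. alpha j w / (rej p alpha (j - 1) w + 1) \<partial>M))"
  proof (rule sum_mono)
    fix j assume "j \<in> H0 theta t"
    then have j: "1 \<le> j" "theta j = 0" using H0 by auto
    show "(\<integral>w. delta p alpha j w / (rej p alpha (j - 1) w + 1) \<partial>M)
        \<le> (\<integral>w. alpha j w / (rej p alpha (j - 1) w + 1) \<partial>M)"
    proof (rule key_step[where p=p and alpha=alpha and j=j and n="j - 1"])
      show "prob_space M" by fact
      show "\<And>s. p s \<in> borel_measurable M" by fact
      show "\<And>s. alpha s \<in> borel_measurable M" by fact
      show "\<And>s w. w \<in> space M \<Longrightarrow> alpha s w \<in> {0..1}" by (rule assms(8))
      show "alpha j \<in> borel_measurable (filt M p alpha (j - 1))" by (rule assms(9)[OF j(1)])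
      show "\<And>u. u \<in> {0..1} \<Longrightarrow> AE w in M. real_cond_exp M (filt M p alpha (j - 1))
                          (indicator {w'\<in>space M. p j w' \<le> u}) w \<le> u"
        by (rule assms(10)[OF j])
    qed
  qed
  also have "\<dots> = (\<integral>w. FDP_star_e p alpha theta t w \<partial>M)"
    unfolding FDP_star_e_def[abs_def]
    by (rule Bochner_Integration.integral_sum[symmetric]) (rule int3)
  also have "\<dots> \<le> \<alpha>" by (rule assms(12))
  finally show ?thesis .
qed

end
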